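(* For all integers $s,t\ge 1$, the complete tripartite graph $K_{1,s,t}$ has property $M(3)$. Consequently, if $\max\{s,t\}\ge 2$, then $m(K_{1,s,t})=3$.
   Context: All graphs are finite, simple and undirected. A list assignment $L$ for a graph $G$ assigns to each vertex $v$ a set $L(v)$ of colors; an $L$-coloring is a proper vertex coloring $c$ of $G$ with $c(v)\in L(v)$ for every vertex $v$. A $k$-list assignment is a list assignment with $|L(v)|=k$ for all $v$. $G$ is uniquely $k$-list colorable (U$k$LC) if there exists a $k$-list assignment $L$ such that $G$ has exactly one $L$-coloring. $G$ has property $M(k)$ if it is not U$k$LC, i.e. for every $k$-list assignment $L$, $G$ has either no $L$-coloring or at least two $L$-colorings. The m-number $m(G)$ is the least integer $k\ge 1$ such that $G$ has property $M(k)$. $K_{n_1,\dots,n_r}$ denotes the complete $r$-partite graph with parts of sizes $n_1,\dots,n_r$. *)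

theory Defs
  imports Main
begin

text \<open>A finite simple graph is given by a vertex set V and a symmetric,
irreflexive adjacency relation E. Colors are natural numbers; a list
assignment L gives each vertex a set of colors.\<close>

definition is_L_coloring ::
  "'a set \<Rightarrow> ('a \<Rightarrow> 'a \<Rightarrow> bool) \<Rightarrow> ('a \<Rightarrow> nat set) \<Rightarrow> ('a \<Rightarrow> nat) \<Rightarrow> bool" where
  "is_L_coloring V E L c \<longleftrightarrow>
     (\<forall>v\<in>V. c v \<in> L v) \<and> (\<forall>u\<in>V. \<forall>v\<in>V. E u v \<longrightarrow> c u \<noteq> c v)"

definition is_k_list_assignment ::
  "'a set \<Rightarrow> ('a \<Rightarrow> nat set) \<Rightarrow> nat \<Rightarrow> bool" where
  "is_k_list_assignment V L k \<longleftrightarrow> (\<forall>v\<in>V. finite (L v) \<and> card (L v) = k)"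

definition unique_L_coloring ::
  "'a set \<Rightarrow> ('a \<Rightarrow> 'a \<Rightarrow> bool) \<Rightarrow> ('a \<Rightarrow> nat set) \<Rightarrow> bool" where
  "unique_L_coloring V E L \<longleftrightarrow>
     (\<exists>c. is_L_coloring V E L c \<and>
          (\<forall>c'. is_L_coloring V E L c' \<longrightarrow> (\<forall>v\<in>V. c' v = c v)))"

definition uniquely_k_list_colorable ::
  "'a set \<Rightarrow> ('a \<Rightarrow> 'a \<Rightarrow> bool) \<Rightarrow> nat \<Rightarrow> bool" where
  "uniquely_k_list_colorable V E k \<longleftrightarrow>
     (\<exists>L. is_k_list_assignment V L k \<and> unique_L_coloring V E L)"

definition property_M :: "'a set \<Rightarrow> ('a \<Rightarrow> 'a \<Rightarrow> bool) \<Rightarrow> nat \<Rightarrow> bool" where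
  "property_M V E k \<longleftrightarrow> \<not> uniquely_k_list_colorable V E k"

definition m_number :: "'a set \<Rightarrow> ('a \<Rightarrow> 'a \<Rightarrow> bool) \<Rightarrow> nat" where
  "m_number V E = (LEAST k. k \<ge> 1 \<and> property_M V E k)"

text \<open>Complete multipartite graph K_{n_1,...,n_r}: vertex (i,j) is the j-th
vertex of part i; two vertices are adjacent iff they lie in different parts.\<close>
definition cmp_vertices :: "nat list \<Rightarrow> (nat \<times> nat) set" where
  "cmp_vertices ns = {(i, j). i < length ns \<and> j < ns ! i}"

definition cmp_adj :: "nat \<times> nat \<Rightarrow> nat \<times> nat \<Rightarrow> bool" where
  "cmp_adj u v \<longleftrightarrow> fst u \<noteq> fst v"

end

theory Submission
  imports Defs
begin

lemma memV: "(i,j) \<in> cmp_vertices [1,s,t] \<longleftrightarrow> (i=0 \<and> j=0) \<or> (i=1 \<and> j<s) \<or> (i=2 \<and> j<t)"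
proof -
  have "i < 3 \<longleftrightarrow> i = 0 \<or> i = 1 \<or> i = 2" by auto
  then show ?thesis unfolding cmp_vertices_def by auto
qed

lemma memV': "v \<in> cmp_vertices [1,s,t] \<longleftrightarrow> (fst v=0 \<and> snd v=0) \<or> (fst v=1 \<and> snd v<s) \<or> (fst v=2 \<and> snd v<t)"
  using memV[of "fst v" "snd v"] by simp

lemma M3:
  assumes "s \<ge> 1"
  shows "property_M (cmp_vertices [1,s,t]) cmp_adj 3"
proof -
  let ?V = "cmp_vertices [1,s,t]"
  have "\<not> unique_L_coloring ?V cmp_adj L" if L3: "is_k_list_assignment ?V L 3" for L
  proof
    assume "unique_L_coloring ?V cmp_adj L"
    then obtain c where col: "is_L_coloring ?V cmp_adj L c"
      and uni: "\<forall>c'. is_L_coloring ?V cmp_adj L c' \<longrightarrow> (\<forall>v\<in>?V. c' v = c v)"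
      unfolding unique_L_coloring_def by blast
    have a: "(0,0) \<in> ?V" unfolding memV by simp
    have b: "(1,0) \<in> ?V" using assms unfolding memV by simp
    define z where "z v = (SOME x. x \<in> L v - {c v, c (0,0)})" for v
    have zin: "z v \<in> L v - {c v, c (0,0)}" if "v \<in> ?V" for v
    proof -
      have fin: "finite (L v)" "card (L v) = 3" using L3 that unfolding is_k_list_assignment_def by auto
      have "\<not> L v \<subseteq> {c v, c (0,0)}"
      proof
        assume "L v \<subseteq> {c v, c (0,0)}"
        then have "card (L v) \<le> card {c v, c (0,0)}" by (intro card_mono) auto
        also have "\<dots> \<le> 2" by (simp add: card_insert_if)
        finally show False using fin by simp
      qed
      then have "\<exists>x. x \<in> L v - {c v, c (0,0)}" by blast
      then show ?thesis unfolding z_def by (rule someI_ex)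
    qed
    have colL: "\<And>v. v \<in> ?V \<Longrightarrow> c v \<in> L v" and colP: "\<And>u v. u \<in> ?V \<Longrightarrow> v \<in> ?V \<Longrightarrow> fst u \<noteq> fst v \<Longrightarrow> c u \<noteq> c v"
      using col unfolding is_L_coloring_def cmp_adj_def by auto
    have zused: "\<exists>u\<in>?V. fst u \<noteq> 0 \<and> fst u \<noteq> fst v \<and> c u = z v" if v: "v \<in> ?V" "fst v \<noteq> 0" for v
    proof (rule ccontr)
      assume neg: "\<not> ?thesis"
      have "is_L_coloring ?V cmp_adj L (c(v := z v))"
        unfolding is_L_coloring_def cmp_adj_def
      proof (intro conjI ballI impI)
        fix u assume u: "u \<in> ?V" then show "(c(v := z v)) u \<in> L u" using zin[OF u] colL[OF u] zin[OF v(1)] by auto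
      next
        fix u w assume uw: "u \<in> ?V" "w \<in> ?V" "fst u \<noteq> fst w"
        show "(c(v := z v)) u \<noteq> (c(v := z v)) w"
        proof (cases "u = v")
          case True
          then have "w \<noteq> v" using uw by auto
          moreover have "z v \<noteq> c w"
          proof (cases "fst w = 0")
            case True
            then have "w = (0,0)" using uw(2) memV'[of w] by (cases w) auto
            then show ?thesis using zin[OF v(1)] by auto
          next
            case False then show ?thesis using neg uw True by auto
          qed
          ultimately show ?thesis using True by simp
        next
          case False
          show ?thesis
          proof (cases "w = v")
            case True
            have "z v \<noteq> c u"
            proof (cases "fst u = 0")
              case True
              then have "u = (0,0)" using uw(1) memV'[of u] by (cases u) auto
              then show ?thesis using zin[OF v(1)] by auto
            next
              case False then show ?thesis using neg uw True by auto
            qed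
            then show ?thesis using True False by simp
          next
            case False2: False
            then show ?thesis using False colP uw by simp
          qed
        qed
      qed
      then have "z v = c v" using uni v by force
      then show False using zin[OF v(1)] by auto
    qed
    define c' where "c' v = (if fst v = 0 then c v else z v)" for v
    have "is_L_coloring ?V cmp_adj L c'"
      unfolding is_L_coloring_def cmp_adj_def
    proof (intro conjI ballI impI)
      fix u assume "u \<in> ?V" then show "c' u \<in> L u" using zin colL by (auto simp: c'_def)
    next
      fix u w assume uw: "u \<in> ?V" "w \<in> ?V" "fst u \<noteq> fst w"
      have r: "fst x = 0 \<or> fst x = 1 \<or> fst x = 2" if "x \<in> ?V" for x using that memV'[of x] by auto
      have o: "x = (0,0)" if "x \<in> ?V" "fst x = 0" for x using that memV'[of x] by (cases x) auto
      show "c' u \<noteq> c' w"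
      proof (cases "fst u = 0")
        case True
        then show ?thesis using uw zin[OF uw(2)] o[OF uw(1)] by (auto simp: c'_def)
      next
        case F1: False
        show ?thesis
        proof (cases "fst w = 0")
          case True
          then show ?thesis using uw zin[OF uw(1)] o[OF uw(2)] F1 by (auto simp: c'_def)
        next
          case F2: False
          obtain u' where u': "u' \<in> ?V" "fst u' \<noteq> 0" "fst u' \<noteq> fst u" "c u' = z u" using zused[OF uw(1) F1] by blast
          obtain w' where w': "w' \<in> ?V" "fst w' \<noteq> 0" "fst w' \<noteq> fst w" "c w' = z w" using zused[OF uw(2) F2] by blast
          have "fst u' \<noteq> fst w'" using r[OF u'(1)] r[OF w'(1)] r[OF uw(1)] r[OF uw(2)] u' w' uw F1 F2 by auto
          then have "c u' \<noteq> c w'" using colP u'(1) w'(1) by blast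
          then show ?thesis using u' w' F1 F2 by (simp add: c'_def)
        qed
      qed
    qed
    then have "c' (1,0) = c (1,0)" using uni b by blast
    then show False using zin[OF b] by (simp add: c'_def)
  qed
  then show ?thesis unfolding property_M_def uniquely_k_list_colorable_def by blast
qed

lemma notM1: "\<not> property_M (cmp_vertices [1,s,t]) cmp_adj 1"
proof -
  let ?V = "cmp_vertices [1,s,t]"
  define f where "f v = fst v + 3 * snd v" for v :: "nat \<times> nat"
  define L where "L v = {f v}" for v
  have r: "fst x < 3" if "x \<in> ?V" for x using that memV'[of x] by auto
  have inj: "f u \<noteq> f w" if "u \<in> ?V" "w \<in> ?V" "fst u \<noteq> fst w" for u w
  proof
    assume "f u = f w"
    then have "f u mod 3 = f w mod 3" by simp
    then show False using r[OF that(1)] r[OF that(2)] that(3) by (simp add: f_def)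
  qed
  have "is_k_list_assignment ?V L 1" by (simp add: is_k_list_assignment_def L_def)
  moreover have "unique_L_coloring ?V cmp_adj L"
    unfolding unique_L_coloring_def
  proof (intro exI conjI allI impI)
    show "is_L_coloring ?V cmp_adj L f"
      unfolding is_L_coloring_def cmp_adj_def L_def using inj by auto
  next
    fix c' assume "is_L_coloring ?V cmp_adj L c'"
    then show "\<forall>v\<in>?V. c' v = f v" unfolding is_L_coloring_def L_def by auto
  qed
  ultimately show ?thesis unfolding property_M_def uniquely_k_list_colorable_def by blast
qed

lemma notM2:
  assumes "s \<ge> 1" "t \<ge> 1" "max s t \<ge> 2"
  shows "\<not> property_M (cmp_vertices [1,s,t]) cmp_adj 2"
proof -
  let ?V = "cmp_vertices [1,s,t]"
  obtain p q :: nat where pq: "(p = 1 \<and> q = 2 \<and> s \<ge> 2) \<or> (p = 2 \<and> q = 1 \<and> t \<ge> 2)"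
    using assms by (metis max_def)
  define L where "L v = (if fst v = 0 then {1,2} else if fst v = q then {2,3}
      else if snd v = 0 then {1,3} else {1,2::nat})" for v :: "nat \<times> nat"
  define f where "f v = (if fst v = 0 then 2 else if fst v = q then 3 else 1::nat)" for v :: "nat \<times> nat"
  have r: "fst x = 0 \<or> fst x = 1 \<or> fst x = 2" if "x \<in> ?V" for x using that memV'[of x] by auto
  have A: "(0,0) \<in> ?V" "(q,0) \<in> ?V" "(p,0) \<in> ?V" "(p,1) \<in> ?V" using pq assms unfolding memV by auto
  have "is_k_list_assignment ?V L 2" by (simp add: is_k_list_assignment_def L_def)
  moreover have "unique_L_coloring ?V cmp_adj L"
    unfolding unique_L_coloring_def
  proof (intro exI conjI allI impI)
    show "is_L_coloring ?V cmp_adj L f"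
      unfolding is_L_coloring_def cmp_adj_def
    proof (intro conjI ballI impI)
      fix u assume u: "u \<in> ?V" show "f u \<in> L u" using r[OF u] pq by (auto simp: L_def f_def)
    next
      fix u w assume "u \<in> ?V" "w \<in> ?V" "fst u \<noteq> fst w"
      then show "f u \<noteq> f w" using r[of u] r[of w] pq by (auto simp: f_def)
    qed
  next
    fix d assume d: "is_L_coloring ?V cmp_adj L d"
    have dL: "\<And>v. v \<in> ?V \<Longrightarrow> d v \<in> L v" and dP: "\<And>u v. u \<in> ?V \<Longrightarrow> v \<in> ?V \<Longrightarrow> fst u \<noteq> fst v \<Longrightarrow> d u \<noteq> d v"
      using d unfolding is_L_coloring_def cmp_adj_def by auto
    have da: "d (0,0) = 2"
    proof (rule ccontr)
      assume "d (0,0) \<noteq> 2"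
      then have "d (0,0) = 1" using dL[OF A(1)] by (auto simp: L_def)
      moreover have "d (p,0) \<in> {1,3}" using dL[OF A(3)] pq by (auto simp: L_def)
      moreover have "d (p,0) \<noteq> d (0,0)" using dP[OF A(3) A(1)] pq by auto
      moreover have "d (q,0) \<in> {2,3}" using dL[OF A(2)] pq by (auto simp: L_def)
      moreover have "d (q,0) \<noteq> d (p,0)" using dP[OF A(2) A(3)] pq by auto
      moreover have "d (p,1) \<in> {1,2}" using dL[OF A(4)] pq by (auto simp: L_def)
      moreover have "d (p,1) \<noteq> d (0,0)" using dP[OF A(4) A(1)] pq by auto
      moreover have "d (p,1) \<noteq> d (q,0)" using dP[OF A(4) A(2)] pq by auto
      ultimately show False by auto
    qed
    have dq: "d (q,0) = 3" using dL[OF A(2)] dP[OF A(2) A(1)] pq da by (auto simp: L_def)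
    show "\<forall>v\<in>?V. d v = f v"
    proof
      fix v assume v: "v \<in> ?V"
      show "d v = f v"
      proof (cases "fst v = 0")
        case True
        then have "v = (0,0)" using v memV'[of v] by (cases v) auto
        then show ?thesis using da by (simp add: f_def)
      next
        case F: False
        show ?thesis
        proof (cases "fst v = q")
          case True
          then show ?thesis using dL[OF v] dP[OF v A(1)] da F by (auto simp: L_def f_def)
        next
          case F2: False
          then have fp: "fst v = p" using r[OF v] F pq by auto
          show ?thesis
          proof (cases "snd v = 0")
            case True
            then show ?thesis using dL[OF v] dP[OF v A(2)] dq F F2 fp pq by (auto simp: L_def f_def)
          next
            case False
            then show ?thesis using dL[OF v] dP[OF v A(1)] da F F2 by (auto simp: L_def f_def)
          qed
        qed
      qed
    qed
  qed
  ultimately show ?thesis unfolding property_M_def uniquely_k_list_colorable_def by blast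
qed

theorem proposition3p5:
  fixes s t :: nat
  assumes "s \<ge> 1" and "t \<ge> 1"
  shows "property_M (cmp_vertices [1, s, t]) cmp_adj 3 \<and>
         (max s t \<ge> 2 \<longrightarrow> m_number (cmp_vertices [1, s, t]) cmp_adj = 3)"
proof (intro conjI impI)
  show "property_M (cmp_vertices [1, s, t]) cmp_adj 3" using M3 assms by blast
next
  assume m: "max s t \<ge> 2"
  show "m_number (cmp_vertices [1, s, t]) cmp_adj = 3"
    unfolding m_number_def
  proof (rule Least_equality)
    show "3 \<ge> (1::nat) \<and> property_M (cmp_vertices [1, s, t]) cmp_adj 3" using M3 assms by simp
  next
    fix k assume k: "1 \<le> k \<and> property_M (cmp_vertices [1, s, t]) cmp_adj k"
    show "3 \<le> k"
    proof (rule ccontr)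
      assume "\<not> 3 \<le> k"
      then have "k = 1 \<or> k = 2" using k by auto
      then show False using k notM1 notM2[OF assms m] by auto
    qed
  qed
qed

end
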